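(* Consider on-line exploration of rings with homebase $v_0$ and invoking cost $q\ge 0$. Let $\mathcal{S}$ be the on-line strategy (procedure RingOnline) defined as follows. Invoke an agent $a_1$ at $v_0$. Let $f_1,f_{-1}$ be the two edges incident to $v_0$ with $w(f_1)\le w(f_{-1})$. Maintain an edge $R$ (initially $R=f_1$), an edge $L$ (initially $L=f_{-1}$) and a flag $s$ (initially $s=1$). Repeat until all vertices are explored: (i) while $w(L)+q\cdot s\ge w(R)$ and not all vertices are explored: $a_1$ traverses $R$, and $R$ is reset to the unexplored edge incident to the vertex now occupied by $a_1$; (ii) if $s=1$ and $w(f_{-1})+q<w(R)$: invoke a second agent $a_2$ at $v_0$, $a_2$ traverses $f_{-1}$, $L$ is reset to the unexplored edge incident to the vertex now occupied by $a_2$, and $s$ is set to $0$; (iii) if $s=0$: while $w(L)<w(R)$ and not all vertices are explored: $a_2$ traverses $L$, and $L$ is reset to the unexplored edge incident to the vertex now occupied by $a_2$. Then $\mathcal{S}$ is $2$-competitive on rings: for every edge-weighted ring $C$ with homebase $v_0$, $\mathcal{S}(C)\le 2\,\mathcal{S}^{opt}(C)$.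
   Context: Exploration model: a connected undirected graph with positive edge weights $w$ and a designated homebase vertex is given, together with an invoking cost $q\ge 0$. A strategy is a sequence of moves, each either (1) invoking a new agent, which appears at the homebase, or (2) an agent traversing an edge incident to its current vertex. A vertex is explored when first visited; a strategy explores the graph when every vertex has been visited by some agent (agents need not return to the homebase). If $k$ agents are used and agent $i$ traverses total distance $d_i$ (sum of weights of traversed edges, with multiplicity), the cost is $kq+\sum_i d_i$. A ring is a cycle graph with $n\ge 3$ vertices. In the on-line setting the graph is not known in advance: an agent at a vertex $v$ knows the weights of the edges incident to $v$ and whether each neighbour of $v$ is already explored, and agents communicate freely; the strategy's moves depend only on information revealed so far. $\mathcal{S}(C)$ denotes the cost of strategy $\mathcal{S}$ on $C$, and $\mathcal{S}^{opt}(C)$ the minimum cost of an off-line strategy (with full knowledge of $C$) exploring $C$ with the same $q$ and homebase. *)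

theory Defs
  imports Complex_Main "HOL-Library.While_Combinator"
begin

text \<open>A ring with n >= 3 vertices is represented by vertices 0,...,n-1, where
  vertex i is joined to vertex (i+1) mod n by an edge of weight w i.
  The homebase is vertex 0.\<close>

definition ring_adj :: "nat \<Rightarrow> nat \<Rightarrow> nat \<Rightarrow> bool" where
  "ring_adj n u v \<longleftrightarrow> u < n \<and> v < n \<and> (v = (u + 1) mod n \<or> u = (v + 1) mod n)"

definition ring_wt :: "nat \<Rightarrow> (nat \<Rightarrow> real) \<Rightarrow> nat \<Rightarrow> nat \<Rightarrow> real" where
  "ring_wt n w u v = (if v = (u + 1) mod n then w u else w v)"

datatype move = Invoke | Go nat nat  \<comment> \<open>Go i v: agent i (0-based) traverses the edge to v\<close>

text \<open>State: list of agent positions, set of explored vertices, accumulated cost.\<close>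
fun exec :: "nat \<Rightarrow> (nat \<Rightarrow> real) \<Rightarrow> real \<Rightarrow> move list \<Rightarrow> nat list \<times> nat set \<times> real
    \<Rightarrow> (nat list \<times> nat set \<times> real) option" where
  "exec n w q [] st = Some st"
| "exec n w q (Invoke # ms) (ps, V, c) = exec n w q ms (ps @ [0], insert 0 V, c + q)"
| "exec n w q (Go i v # ms) (ps, V, c) =
     (if i < length ps \<and> ring_adj n (ps ! i) v
      then exec n w q ms (ps[i := v], insert v V, c + ring_wt n w (ps ! i) v)
      else None)"

definition explore_costs :: "nat \<Rightarrow> (nat \<Rightarrow> real) \<Rightarrow> real \<Rightarrow> real set" where
  "explore_costs n w q = {c. \<exists>ms ps. exec n w q ms ([], {}, 0) = Some (ps, {..<n}, c)}"

definition ring_opt :: "nat \<Rightarrow> (nat \<Rightarrow> real) \<Rightarrow> real \<Rightarrow> real" where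
  "ring_opt n w q = Inf (explore_costs n w q)"

text \<open>Direction d of a1: the edge f_1 is the lighter edge at the homebase
  (ties broken towards vertex 1). Offset k in direction d is vertex (d*k) mod n.\<close>

definition rdir :: "nat \<Rightarrow> (nat \<Rightarrow> real) \<Rightarrow> int" where
  "rdir n w = (if w 0 \<le> w (n - 1) then 1 else -1)"

definition rpos :: "nat \<Rightarrow> int \<Rightarrow> nat \<Rightarrow> nat" where
  "rpos n d k = nat ((d * int k) mod int n)"

definition rfwd :: "nat \<Rightarrow> (nat \<Rightarrow> real) \<Rightarrow> int \<Rightarrow> nat \<Rightarrow> real" where
  "rfwd n w d k = ring_wt n w (rpos n d k) (rpos n d (Suc k))"

text \<open>Simulation state (phase, r, l, s, moves): a1 is at offset r in direction d
  (so R is the edge from offset r to r+1), a2 (if invoked) is at offset l in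
  direction -d (so L is the edge from offset l to l+1 in direction -d;
  before a2 is invoked l = 0 and L = f_{-1}); s is the flag.
  Phase 1/2/3 corresponds to steps (i)/(ii)/(iii). The procedure stops as
  soon as all vertices are explored, i.e. when r + l = n - 1.\<close>

type_synonym rstate = "nat \<times> nat \<times> nat \<times> bool \<times> move list"

definition ronline_step :: "nat \<Rightarrow> (nat \<Rightarrow> real) \<Rightarrow> real \<Rightarrow> rstate \<Rightarrow> rstate" where
  "ronline_step n w q st = (case st of (ph, r, l, s, ms) \<Rightarrow>
     (let d = rdir n w; wR = rfwd n w d r; wL = rfwd n w (-d) l;
          wfm1 = rfwd n w (-d) 0 in
      if ph = 1 then
        (if wL + q * (if s then 1 else 0) \<ge> wR
         then (1, Suc r, l, s, ms @ [Go 0 (rpos n d (Suc r))])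
         else (2, r, l, s, ms))
      else if ph = 2 then
        (if s \<and> wfm1 + q < wR
         then (3, r, Suc l, False, ms @ [Invoke, Go 1 (rpos n (-d) (Suc l))])
         else (3, r, l, s, ms))
      else
        (if \<not> s \<and> wL < wR
         then (3, r, Suc l, s, ms @ [Go 1 (rpos n (-d) (Suc l))])
         else (1, r, l, s, ms))))"

definition ring_online :: "nat \<Rightarrow> (nat \<Rightarrow> real) \<Rightarrow> real \<Rightarrow> move list option" where
  "ring_online n w q =
     map_option (\<lambda>(ph, r, l, s, ms). ms)
       (while_option (\<lambda>(ph, r, l, s, ms). r + l < n - 1) (ronline_step n w q)
          (1, 0, 0, True, [Invoke]))"

end

theory Submission
  imports Defs
begin


lemma exec_append:
  "exec n w q (ms1 @ ms2) st = (case exec n w q ms1 st of None \<Rightarrow> None | Some st' \<Rightarrow> exec n w q ms2 st')"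
proof (induction ms1 arbitrary: st)
  case Nil then show ?case by simp
next
  case (Cons m ms1)
  obtain ps V c where st: "st = (ps,V,c)" by (cases st)
  show ?case using Cons by (cases m) (auto simp: st)
qed

fun trav :: "nat \<Rightarrow> move list \<Rightarrow> nat list \<Rightarrow> nat list" where
  "trav n [] ps = []"
| "trav n (Invoke # ms) ps = trav n ms (ps @ [0])"
| "trav n (Go i v # ms) ps = (if i < length ps \<and> ring_adj n (ps ! i) v
      then (if v = (ps ! i + 1) mod n then ps ! i else v) # trav n ms (ps[i := v]) else [])"

definition ninv :: "move list \<Rightarrow> nat" where "ninv ms = length (filter (\<lambda>m. m = Invoke) ms)"

lemma exec_cost:
  "exec n w q ms (ps, V, c) = Some (ps', V', c') \<Longrightarrow>
   c' = c + q * real (ninv ms) + sum_list (map w (trav n ms ps))"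
proof (induction ms arbitrary: ps V c)
  case Nil then show ?case by (simp add: ninv_def)
next
  case (Cons m ms)
  then show ?case
    by (cases m) (auto simp: ninv_def ring_wt_def algebra_simps split: if_splits dest!: Cons.IH)
qed

lemma trav_lt: "x \<in> set (trav n ms ps) \<Longrightarrow> x < n"
  by (induction n ms ps rule: trav.induct) (auto simp: ring_adj_def split: if_splits)

lemma exec_arc:
  assumes "exec n w q ms (ps, V, c) = Some (ps', V', c')"
    and "i \<notin> set (trav n ms ps)" "j \<notin> set (trav n ms ps)" "i < j" "j < n"
    and "\<forall>x\<in>set ps. x \<notin> {Suc i..j}" "\<forall>x\<in>V. x \<notin> {Suc i..j}"
  shows "\<forall>x\<in>V'. x \<notin> {Suc i..j}"
  using assms
proof (induction ms arbitrary: ps V c)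
  case Nil then show ?case by simp
next
  case (Cons m ms)
  show ?case
  proof (cases m)
    case Invoke
    then show ?thesis using Cons.prems by (intro Cons.IH[of "ps @ [0]" "insert 0 V" "c+q"]) auto
  next
    case (Go k v)
    have ok: "k < length ps \<and> ring_adj n (ps ! k) v" using Cons.prems Go by (auto split: if_splits)
    define u where "u = ps ! k"
    have u: "u \<notin> {Suc i..j}" using ok Cons.prems(6) unfolding u_def by auto
    have e: "(if v = (u + 1) mod n then u else v) \<noteq> i" "(if v = (u + 1) mod n then u else v) \<noteq> j"
      using Cons.prems(2,3) ok Go by (auto simp: u_def)
    have adj: "v = (u+1) mod n \<or> u = (v+1) mod n" "u < n" "v < n" using ok by (auto simp: ring_adj_def u_def)
    have e1: "u \<noteq> i \<and> u \<noteq> j" if "v = (u+1) mod n" using e[unfolded if_P[OF that]] by blast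
    have e2: "v \<noteq> i \<and> v \<noteq> j" if "v \<noteq> (u+1) mod n" using e[unfolded if_not_P[OF that]] by blast
    have v: "v \<notin> {Suc i..j}"
    proof
      assume vin: "v \<in> {Suc i..j}"
      show False
      proof (cases "v = (u+1) mod n")
        case True
        note ui = e1[OF True]
        show False
        proof (cases "u + 1 < n")
          case True2: True
          then have "v = u + 1" using True by simp
          then show False using vin u ui by simp
        next
          case False
          then have "u + 1 = n" using adj by simp
          then have "v = 0" using True by simp
          then show False using vin by simp
        qed
      next
        case False
        note vi = e2[OF False]
        have uv: "u = (v+1) mod n" using adj False by simp
        have "v + 1 < n" using vin vi Cons.prems(5) by simp
        then have "u = v + 1" using uv by simp
        then show False using vin vi u by simp
      qed
    qed
    have "exec n w q ms (ps[k := v], insert v V, c + ring_wt n w u v) = Some (ps', V', c')"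
      using Cons.prems(1) Go ok by (simp add: u_def)
    moreover have "i \<notin> set (trav n ms (ps[k := v]))" "j \<notin> set (trav n ms (ps[k := v]))"
      using Cons.prems(2,3) Go ok by (auto simp: u_def)
    moreover have "\<forall>x\<in>set (ps[k := v]). x \<notin> {Suc i..j}"
      using Cons.prems(6) v set_update_subset_insert[of ps k v] by blast
    ultimately show ?thesis using Cons.prems(4,5,7) v
      by (intro Cons.IH[of "ps[k:=v]" "insert v V" "c + ring_wt n w u v"]) auto
  qed
qed

lemma sum_list_ge_set:
  assumes "\<forall>x\<in>set xs. f x \<ge> (0::real)"
  shows "sum f (set xs) \<le> sum_list (map f xs)"
  using assms
proof (induction xs)
  case Nil then show ?case by simp
next
  case (Cons x xs)
  have "sum f (set (x # xs)) \<le> f x + sum f (set xs)"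
    using Cons.prems by (simp add: sum.insert_if)
  then show ?case using Cons by simp
qed

lemma lower_bound:
  assumes n3: "n \<ge> 3" and wpos: "\<forall>i<n. w i > 0" and q0: "q \<ge> 0"
    and ex: "exec n w q ms ([], {}, 0) = Some (ps, {..<n}, c)"
  shows "\<exists>e<n. q + (\<Sum>k<n. w k) - w e \<le> c"
proof -
  have ninv1: "ninv ms \<ge> 1"
  proof (cases ms)
    case Nil
    have "(0::nat) \<in> {..<n}" using n3 by simp
    then show ?thesis using ex Nil by auto
  next
    case (Cons m ms')
    then show ?thesis using ex by (cases m) (auto simp: ninv_def)
  qed
  define T where "T = set (trav n ms [])"
  have Tn: "T \<subseteq> {..<n}" using trav_lt unfolding T_def by blast
  have miss: False if "i < j" "j < n" "i \<notin> T" "j \<notin> T" for i j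
  proof -
    have "\<forall>x\<in>{..<n}. x \<notin> {Suc i..j}"
      using exec_arc[OF ex] that unfolding T_def by auto
    then show False using that by auto
  qed
  have c: "c = q * real (ninv ms) + sum_list (map w (trav n ms []))"
    using exec_cost[OF ex] by simp
  have "sum w T \<le> sum_list (map w (trav n ms []))"
    unfolding T_def using sum_list_ge_set[of "trav n ms []" w] trav_lt wpos
    by (metis less_imp_le)
  moreover have "q \<le> q * real (ninv ms)" using ninv1 q0
    by (metis mult.right_neutral mult_left_mono of_nat_1 of_nat_le_iff)
  ultimately have cT: "q + sum w T \<le> c" using c by linarith
  show ?thesis
  proof (cases "T = {..<n}")
    case True
    have "w 0 > 0" using wpos n3 by simp
    then have "q + (\<Sum>k<n. w k) - w 0 \<le> c" using cT True by simp
    then show ?thesis using n3 by (intro exI[of _ 0]) simp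
  next
    case False
    then obtain e where e: "e < n" "e \<notin> T" using Tn by auto
    have sub: "{..<n} - {e} \<subseteq> T"
    proof
      fix i assume "i \<in> {..<n} - {e}"
      then show "i \<in> T" using miss[of i e] miss[of e i] e by (cases "i < e") auto
    qed
    have "sum w ({..<n} - {e}) \<le> sum w T"
      using sum_mono2[OF _ sub] Tn wpos by (meson finite_lessThan finite_subset less_imp_le lessThan_iff subsetD DiffD1)
    moreover have "sum w ({..<n} - {e}) = (\<Sum>k<n. w k) - w e"
      using e by (simp add: sum_diff1)
    ultimately show ?thesis using cT e by (intro exI[of _ e]) auto
  qed
qed



lemma rpos_int: "n > 0 \<Longrightarrow> int (rpos n d k) = (d * int k) mod int n"
  by (simp add: rpos_def)

lemma rpos_lt: "n > 0 \<Longrightarrow> rpos n d k < n"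
proof -
  assume n: "n > 0"
  have "(d * int k) mod int n < int n" using n by simp
  then show ?thesis using rpos_int[OF n, of d k] by linarith
qed

lemma rpos_0[simp]: "rpos n d 0 = 0" by (simp add: rpos_def)

lemma int_eqI: "int a = int b \<Longrightarrow> a = b" by simp

lemma rpos_succ1: "n > 0 \<Longrightarrow> rpos n 1 (Suc k) = (rpos n 1 k + 1) mod n"
proof -
  assume n: "n > 0"
  show ?thesis
    apply (rule int_eqI)
    using n by (simp add: rpos_int zmod_int mod_add_right_eq)
qed

lemma rpos_succm1: "n > 0 \<Longrightarrow> rpos n (-1) k = (rpos n (-1) (Suc k) + 1) mod n"
proof -
  assume n: "n > 0"
  have "int ((rpos n (-1) (Suc k) + 1) mod n) = ((- int (Suc k)) mod int n + 1) mod int n"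
    using n by (simp add: rpos_int zmod_int add.commute)
  also have "\<dots> = (- int (Suc k) + 1) mod int n" by (rule mod_add_left_eq)
  also have "\<dots> = int (rpos n (-1) k)" using n by (simp add: rpos_int)
  finally show ?thesis by simp
qed

lemma not_both: fixes n u v :: nat shows "n \<ge> 3 \<Longrightarrow> u < n \<Longrightarrow> v < n \<Longrightarrow> u = (v + 1) mod n \<Longrightarrow> v \<noteq> (u + 1) mod n"
proof
  assume n: "n \<ge> 3" and un: "u < n" and vn: "v < n" and uv: "u = (v + 1) mod n" and vu: "v = (u + 1) mod n"
  show False
  proof (cases "v + 1 < n")
    case True
    have u1: "u = v + 1" using uv mod_less[OF True] by linarith
    show False
    proof (cases "u + 1 < n")
      case True
      have "v = u + 1" using vu mod_less[OF True] by linarith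
      then show False using u1 by linarith
    next
      case False
      then have un1: "u + 1 = n" using un by linarith
      then have "v = 0" using vu by (metis mod_self)
      then show False using u1 un1 n by linarith
    qed
  next
    case False
    then have vn1: "v + 1 = n" using vn by linarith
    then have "u = 0" using uv by (metis mod_self)
    then have "v = 1 mod n" using vu by simp
    moreover have "1 mod n = (1::nat)" using n by simp
    ultimately show False using vn1 n by linarith
  qed
qed

lemma adj1: "n \<ge> 3 \<Longrightarrow> ring_adj n (rpos n 1 k) (rpos n 1 (Suc k))"
proof -
  assume n: "n \<ge> 3"
  then have n0: "n > 0" by simp
  show ?thesis unfolding ring_adj_def using rpos_lt[OF n0] rpos_succ1[OF n0, of k] by blast
qed

lemma adjm1: "n \<ge> 3 \<Longrightarrow> ring_adj n (rpos n (-1) k) (rpos n (-1) (Suc k))"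
proof -
  assume n: "n \<ge> 3"
  then have n0: "n > 0" by simp
  show ?thesis unfolding ring_adj_def using rpos_lt[OF n0] rpos_succm1[OF n0, of k] by blast
qed

lemma rpos1_lt: "k < n \<Longrightarrow> rpos n 1 k = k"
  by (rule int_eqI) (simp add: rpos_int)

lemma rposm1_lt: "k < n \<Longrightarrow> rpos n (-1) (Suc k) = n - 1 - k"
proof (rule int_eqI)
  assume k: "k < n"
  have "int (rpos n (-1) (Suc k)) = (- int (Suc k)) mod int n" using k by (simp add: rpos_int)
  also have "\<dots> = (- int (Suc k) + int n) mod int n" by simp
  also have "\<dots> = - int (Suc k) + int n" using k by (intro mod_pos_pos_trivial) auto
  finally show "int (rpos n (-1) (Suc k)) = int (n - 1 - k)" using k by simp
qed

lemma rfwd1: "n \<ge> 3 \<Longrightarrow> k < n \<Longrightarrow> rfwd n w 1 k = w k"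
proof -
  assume n: "n \<ge> 3" and k: "k < n"
  then have n0: "n > 0" by simp
  have "rpos n 1 (Suc k) = (rpos n 1 k + 1) mod n" by (rule rpos_succ1[OF n0])
  then show ?thesis unfolding rfwd_def ring_wt_def rpos1_lt[OF k] by simp
qed

lemma rfwdm1: "n \<ge> 3 \<Longrightarrow> k < n \<Longrightarrow> rfwd n w (-1) k = w (n - 1 - k)"
proof -
  assume n: "n \<ge> 3" and k: "k < n"
  have "rpos n (-1) (Suc k) \<noteq> (rpos n (-1) k + 1) mod n"
    using not_both[OF n rpos_lt rpos_lt rpos_succm1] n by force
  then show ?thesis unfolding rfwd_def ring_wt_def using rposm1_lt[OF k] by simp
qed

lemma rfwd_pos: "n \<ge> 3 \<Longrightarrow> \<forall>i<n. w i > 0 \<Longrightarrow> rfwd n w d k > 0"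
proof -
  assume n: "n \<ge> 3" and wp: "\<forall>i<n. w i > 0"
  have "rpos n d k < n" "rpos n d (Suc k) < n" using n rpos_lt by auto
  then show ?thesis unfolding rfwd_def ring_wt_def using wp by (simp split: if_split)
qed

lemma rpos_neg: "n > 0 \<Longrightarrow> j \<le> n \<Longrightarrow> rpos n (-d) j = rpos n d (n - j)"
proof (rule int_eqI)
  assume n: "n > 0" and j: "j \<le> n"
  have "int (rpos n d (n - j)) = (d * (int n - int j)) mod int n" using n j by (simp add: rpos_int of_nat_diff)
  also have "\<dots> = (- d * int j + d * int n) mod int n" by (simp add: algebra_simps)
  also have "\<dots> = (- d * int j) mod int n" by (rule mod_mult_self1)
  finally show "int (rpos n (-d) j) = int (rpos n d (n - j))" using n by (simp add: rpos_int)
qed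

lemma rpos_surj: "n > 0 \<Longrightarrow> d = 1 \<or> d = -1 \<Longrightarrow> v < n \<Longrightarrow> \<exists>k<n. rpos n d k = v"
proof -
  assume n: "n > 0" and d: "d = 1 \<or> d = -1" and v: "v < n"
  show ?thesis
  proof (cases "d = 1")
    case True then show ?thesis using v rpos1_lt by auto
  next
    case False
    then have dm: "d = -1" using d by simp
    show ?thesis
    proof (cases "v = 0")
      case True then show ?thesis using n by (intro exI[of _ 0]) simp
    next
      case False
      have "rpos n (- 1) (n - v) = rpos n 1 (n - (n - v))"
        using rpos_neg[OF n, of "n - v" 1] by simp
      also have "\<dots> = v" using v rpos1_lt by simp
      finally show ?thesis using dm False v by (intro exI[of _ "n - v"]) auto
    qed
  qed
qed



lemma exec_prefix:
  "exec n w q ms st0 = Some st \<Longrightarrow> exec n w q (ms @ ms2) st0 = exec n w q ms2 st"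
  by (simp add: exec_append)

locale ronl =
  fixes n :: nat and w :: "nat \<Rightarrow> real" and q :: real and d :: int
  assumes n3: "n \<ge> 3" and wpos: "\<forall>i<n. w i > 0" and q0: "q \<ge> 0"
    and dd: "rdir n w = d" and d1: "d = 1 \<or> d = -1"
begin

abbreviation aw where "aw \<equiv> rfwd n w d"
abbreviation bw where "bw \<equiv> rfwd n w (-d)"
abbreviation WW where "WW \<equiv> sum w {..<n}"

lemma n0: "n > 0" using n3 by simp

lemma adj_d: "ring_adj n (rpos n d k) (rpos n d (Suc k))"
  using d1 adj1[OF n3] adjm1[OF n3] by auto

lemma adj_md: "ring_adj n (rpos n (-d) k) (rpos n (-d) (Suc k))"
  using d1 adj1[OF n3] adjm1[OF n3] by auto

lemma a_pos: "aw k > 0" and b_pos: "bw k > 0"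
  using rfwd_pos[OF n3 wpos] by auto

definition eix :: "nat \<Rightarrow> nat" where "eix k = (if d = 1 then k else n - 1 - k)"

lemma a_w: "k < n \<Longrightarrow> aw k = w (eix k)"
  using d1 rfwd1[OF n3] rfwdm1[OF n3] unfolding eix_def by auto

lemma b_a: "j < n \<Longrightarrow> bw j = aw (n - 1 - j)"
proof -
  assume j: "j < n"
  show ?thesis
  proof (cases "d = 1")
    case True
    then show ?thesis using rfwd1[OF n3, of "n - 1 - j" w] rfwdm1[OF n3 j, of w] j by simp
  next
    case False
    then have "d = -1" using d1 by simp
    then show ?thesis using rfwd1[OF n3 j, of w] rfwdm1[OF n3, of "n - 1 - j" w] j by simp
  qed
qed

lemma eix_lt: "k < n \<Longrightarrow> eix k < n" unfolding eix_def by auto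
lemma eix_eix: "k < n \<Longrightarrow> eix (eix k) = k" unfolding eix_def by auto
lemma eix_inj: "i < n \<Longrightarrow> j < n \<Longrightarrow> eix i = eix j \<Longrightarrow> i = j"
  by (metis eix_eix)

lemma w_a: "e < n \<Longrightarrow> w e = aw (eix e)"
  using a_w[of "eix e"] eix_lt eix_eix by simp

lemma sumW: "sum aw {..<n} = WW"
proof (cases "d = 1")
  case True
  then show ?thesis using rfwd1[OF n3] by (intro sum.cong) auto
next
  case False
  then have dm: "d = -1" using d1 by simp
  have "sum aw {..<n} = (\<Sum>k<n. w (n - Suc k))"
    using rfwdm1[OF n3] dm by (intro sum.cong) auto
  also have "\<dots> = WW" by (rule sum.nat_diff_reindex)
  finally show ?thesis .
qed

lemma single: "k < n \<Longrightarrow> aw k \<le> WW"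
proof -
  assume k: "k < n"
  have "w (eix k) \<le> WW" using eix_lt[OF k] wpos
    by (intro member_le_sum) (auto intro: less_imp_le)
  then show ?thesis using a_w[OF k] by simp
qed

lemma pair: "i < n \<Longrightarrow> j < n \<Longrightarrow> i \<noteq> j \<Longrightarrow> aw i + aw j \<le> WW"
proof -
  assume i: "i < n" and j: "j < n" and ij: "i \<noteq> j"
  have ne: "eix i \<noteq> eix j" using eix_inj i j ij by blast
  have "sum w {eix i, eix j} \<le> WW"
    using eix_lt i j wpos by (intro sum_mono2) (auto intro: less_imp_le)
  then show ?thesis using a_w i j ne by simp
qed

lemma cover: "r + l = n - 1 \<Longrightarrow> rpos n d ` {..r} \<union> rpos n (-d) ` {..l} = {..<n}"
proof
  show "rpos n d ` {..r} \<union> rpos n (-d) ` {..l} \<subseteq> {..<n}" using rpos_lt[OF n0] by auto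
next
  assume rl: "r + l = n - 1"
  show "{..<n} \<subseteq> rpos n d ` {..r} \<union> rpos n (-d) ` {..l}"
  proof
    fix v assume "v \<in> {..<n}"
    then obtain k where k: "k < n" "rpos n d k = v" using rpos_surj[OF n0 d1] by auto
    show "v \<in> rpos n d ` {..r} \<union> rpos n (-d) ` {..l}"
    proof (cases "k \<le> r")
      case True then show ?thesis using k by auto
    next
      case False
      have "rpos n (-d) (n - k) = rpos n d (n - (n - k))" using k by (intro rpos_neg[OF n0]) simp
      also have "\<dots> = v" using k by simp
      finally have "rpos n (-d) (n - k) = v" .
      moreover have "n - k \<le> l" using False rl k by linarith
      ultimately show ?thesis by auto
    qed
  qed
qed

lemma sum_split: "r + l = n - 1 \<Longrightarrow> sum aw {..<r} + sum bw {..<l} + aw r = WW"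
proof (induction l arbitrary: r)
  case 0
  then have "r = n - 1" by simp
  then have "sum aw {..<r} + aw r = sum aw {..<Suc r}" by simp
  also have "Suc r = n" using \<open>r = n - 1\<close> n3 by simp
  finally show ?case using sumW by simp
next
  case (Suc l)
  have IH: "sum aw {..<Suc r} + sum bw {..<l} + aw (Suc r) = WW"
    using Suc.IH[of "Suc r"] Suc.prems by simp
  have "n - Suc l = Suc r" "l < n" using Suc.prems n3 by linarith+
  then have "bw l = aw (Suc r)" using b_a[of l] by simp
  then show ?case using IH by simp
qed


definition inv :: "rstate \<Rightarrow> bool" where
"inv st \<longleftrightarrow> (case st of (ph, r, l, s, ms) \<Rightarrow>
   (ph = 1 \<or> ph = 2 \<or> ph = 3) \<and> r + l \<le> n - 1 \<and> (s \<longrightarrow> l = 0) \<and>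
   exec n w q ms ([], {}, 0) = Some (if s then [rpos n d r] else [rpos n d r, rpos n (-d) l],
        rpos n d ` {..r} \<union> rpos n (-d) ` {..l},
        q * (if s then 1 else 2) + sum aw {..<r} + sum bw {..<l}) \<and>
   (s \<longrightarrow> (\<forall>k<r. aw k \<le> bw 0 + q)) \<and>
   (\<not> s \<longrightarrow> (\<forall>k<r. aw k \<le> max (aw r) (bw l)) \<and> (\<forall>j<l. bw j \<le> max (aw r) (bw l))) \<and>
   (ph = 3 \<and> s \<longrightarrow> aw r \<le> bw 0 + q))"

lemma inv_init: "inv (1, 0, 0, True, [Invoke])"
  unfolding inv_def by auto

lemma step_eq: "ronline_step n w q (ph, r, l, s, ms) =
  (if ph = 1 then
     (if bw l + q * (if s then 1 else 0) \<ge> aw r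
      then (1, Suc r, l, s, ms @ [Go 0 (rpos n d (Suc r))])
      else (2, r, l, s, ms))
   else if ph = 2 then
     (if s \<and> bw 0 + q < aw r
      then (3, r, Suc l, False, ms @ [Invoke, Go 1 (rpos n (-d) (Suc l))])
      else (3, r, l, s, ms))
   else
     (if \<not> s \<and> bw l < aw r
      then (3, r, Suc l, s, ms @ [Go 1 (rpos n (-d) (Suc l))])
      else (1, r, l, s, ms)))"
  unfolding ronline_step_def Let_def dd by simp

lemma step1a:
  assumes I: "inv (1, r, l, s, ms)" and g: "r + l < n - 1"
    and c: "bw l + q * (if s then 1 else 0) \<ge> aw r"
  shows "inv (1, Suc r, l, s, ms @ [Go 0 (rpos n d (Suc r))])"
proof -
  let ?ps = "if s then [rpos n d r] else [rpos n d r, rpos n (-d) l]"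
  let ?V = "rpos n d ` {..r} \<union> rpos n (-d) ` {..l}"
  let ?c = "q * (if s then 1 else 2) + sum aw {..<r} + sum bw {..<l}"
  have ex: "exec n w q ms ([], {}, 0) = Some (?ps, ?V, ?c)" using I unfolding inv_def by simp
  have p0: "?ps ! 0 = rpos n d r" "0 < length ?ps" by auto
  have wt: "ring_wt n w (rpos n d r) (rpos n d (Suc r)) = aw r" by (simp add: rfwd_def)
  have "exec n w q (ms @ [Go 0 (rpos n d (Suc r))]) ([], {}, 0)
     = Some (?ps[0 := rpos n d (Suc r)], insert (rpos n d (Suc r)) ?V, ?c + aw r)"
    using exec_prefix[OF ex] adj_d[of r] p0 wt by simp
  moreover have "?ps[0 := rpos n d (Suc r)] = (if s then [rpos n d (Suc r)] else [rpos n d (Suc r), rpos n (-d) l])"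
    by simp
  moreover have "insert (rpos n d (Suc r)) ?V = rpos n d ` {..Suc r} \<union> rpos n (-d) ` {..l}"
    by (auto simp: atMost_Suc)
  moreover have "?c + aw r = q * (if s then 1 else 2) + sum aw {..<Suc r} + sum bw {..<l}"
    by simp
  ultimately have ex2: "exec n w q (ms @ [Go 0 (rpos n d (Suc r))]) ([], {}, 0) =
     Some (if s then [rpos n d (Suc r)] else [rpos n d (Suc r), rpos n (-d) l],
           rpos n d ` {..Suc r} \<union> rpos n (-d) ` {..l},
           q * (if s then 1 else 2) + sum aw {..<Suc r} + sum bw {..<l})" by simp
  have s1: "s \<longrightarrow> (\<forall>k<Suc r. aw k \<le> bw 0 + q)"
  proof
    assume s: s
    then have "l = 0" using I unfolding inv_def by simp
    then show "\<forall>k<Suc r. aw k \<le> bw 0 + q" using I c s unfolding inv_def by (auto simp: less_Suc_eq)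
  qed
  have s2: "\<not> s \<longrightarrow> (\<forall>k<Suc r. aw k \<le> max (aw (Suc r)) (bw l)) \<and> (\<forall>j<l. bw j \<le> max (aw (Suc r)) (bw l))"
  proof
    assume s: "\<not> s"
    then have c': "aw r \<le> bw l" using c by simp
    have A: "\<forall>k<r. aw k \<le> max (aw r) (bw l)" "\<forall>j<l. bw j \<le> max (aw r) (bw l)"
      using I s unfolding inv_def by auto
    have "max (aw r) (bw l) = bw l" using c' by simp
    then show "(\<forall>k<Suc r. aw k \<le> max (aw (Suc r)) (bw l)) \<and> (\<forall>j<l. bw j \<le> max (aw (Suc r)) (bw l))"
      using A c' by (auto simp: less_Suc_eq max_def)
  qed
  show ?thesis unfolding inv_def using I g ex2 s1 s2 unfolding inv_def by auto
qed

lemma step1b: "inv (1, r, l, s, ms) \<Longrightarrow> inv (2, r, l, s, ms)"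
  unfolding inv_def by auto

lemma step2a:
  assumes I: "inv (2, r, l, s, ms)" and g: "r + l < n - 1"
    and c: "s \<and> bw 0 + q < aw r"
  shows "inv (3, r, Suc l, False, ms @ [Invoke, Go 1 (rpos n (-d) (Suc l))])"
proof -
  have s: s and l0: "l = 0" using c I unfolding inv_def by auto
  have ex: "exec n w q ms ([], {}, 0) = Some ([rpos n d r], rpos n d ` {..r},
        q + sum aw {..<r})"
  proof -
    have "0 \<in> rpos n d ` {..r}" by (metis atMost_iff image_eqI le0 rpos_0)
    then show ?thesis using I s l0 unfolding inv_def by (auto simp: insert_absorb)
  qed
  have wt: "ring_wt n w 0 (rpos n (-d) (Suc 0)) = bw 0" by (simp add: rfwd_def)
  have adj: "ring_adj n 0 (rpos n (-d) (Suc 0))" using adj_md[of 0] by simp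
  have "exec n w q (ms @ [Invoke, Go 1 (rpos n (-d) (Suc l))]) ([], {}, 0)
     = Some ([rpos n d r, rpos n (-d) (Suc 0)], insert (rpos n (-d) (Suc 0)) (insert 0 (rpos n d ` {..r})),
             q + sum aw {..<r} + q + bw 0)"
    using exec_prefix[OF ex] adj wt l0 by simp
  moreover have "insert (rpos n (-d) (Suc 0)) (insert 0 (rpos n d ` {..r})) =
      rpos n d ` {..r} \<union> rpos n (-d) ` {..Suc 0}"
    by (auto simp: atMost_Suc image_iff intro: bexI[of _ 0])
  moreover have "q + sum aw {..<r} + q + bw 0 = q * 2 + sum aw {..<r} + sum bw {..<Suc 0}" by simp
  ultimately have ex2: "exec n w q (ms @ [Invoke, Go 1 (rpos n (-d) (Suc l))]) ([], {}, 0)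
     = Some ([rpos n d r, rpos n (-d) (Suc l)], rpos n d ` {..r} \<union> rpos n (-d) ` {..Suc l},
             q * 2 + sum aw {..<r} + sum bw {..<Suc l})" using l0 by simp
  have A: "\<forall>k<r. aw k \<le> bw 0 + q" using I s unfolding inv_def by auto
  have B: "\<forall>k<r. aw k \<le> max (aw r) (bw (Suc l))" using A c by (auto simp: max_def)
  have C: "\<forall>j<Suc l. bw j \<le> max (aw r) (bw (Suc l))" using c q0 l0 by (auto simp: max_def)
  show ?thesis unfolding inv_def using I g ex2 B C l0 unfolding inv_def by auto
qed

lemma step2b:
  assumes I: "inv (2, r, l, s, ms)" and c: "\<not> (s \<and> bw 0 + q < aw r)"
  shows "inv (3, r, l, s, ms)"
  using I c unfolding inv_def by auto

lemma step3a:
  assumes I: "inv (3, r, l, s, ms)" and g: "r + l < n - 1"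
    and c: "\<not> s \<and> bw l < aw r"
  shows "inv (3, r, Suc l, s, ms @ [Go 1 (rpos n (-d) (Suc l))])"
proof -
  have s: "\<not> s" using c by simp
  let ?V = "rpos n d ` {..r} \<union> rpos n (-d) ` {..l}"
  let ?c = "q * 2 + sum aw {..<r} + sum bw {..<l}"
  have ex: "exec n w q ms ([], {}, 0) = Some ([rpos n d r, rpos n (-d) l], ?V, ?c)"
    using I s unfolding inv_def by auto
  have wt: "ring_wt n w (rpos n (-d) l) (rpos n (-d) (Suc l)) = bw l" by (simp add: rfwd_def)
  have "exec n w q (ms @ [Go 1 (rpos n (-d) (Suc l))]) ([], {}, 0)
     = Some ([rpos n d r, rpos n (-d) (Suc l)], insert (rpos n (-d) (Suc l)) ?V, ?c + bw l)"
    using exec_prefix[OF ex] adj_md[of l] wt by simp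
  moreover have "insert (rpos n (-d) (Suc l)) ?V = rpos n d ` {..r} \<union> rpos n (-d) ` {..Suc l}"
    by (auto simp: atMost_Suc)
  moreover have "?c + bw l = q * 2 + sum aw {..<r} + sum bw {..<Suc l}" by simp
  ultimately have ex2: "exec n w q (ms @ [Go 1 (rpos n (-d) (Suc l))]) ([], {}, 0)
     = Some ([rpos n d r, rpos n (-d) (Suc l)], rpos n d ` {..r} \<union> rpos n (-d) ` {..Suc l},
             q * 2 + sum aw {..<r} + sum bw {..<Suc l})" by simp
  have A: "\<forall>k<r. aw k \<le> max (aw r) (bw l)" "\<forall>j<l. bw j \<le> max (aw r) (bw l)"
    using I s unfolding inv_def by auto
  have mx: "max (aw r) (bw l) = aw r" using c by simp
  have B: "\<forall>k<r. aw k \<le> max (aw r) (bw (Suc l))" using A mx by (auto simp: max_def)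
  have C: "\<forall>j<Suc l. bw j \<le> max (aw r) (bw (Suc l))" using A mx c by (auto simp: max_def less_Suc_eq)
  show ?thesis unfolding inv_def using I g ex2 B C s unfolding inv_def by auto
qed

lemma step3b:
  assumes I: "inv (3, r, l, s, ms)"
  shows "inv (1, r, l, s, ms)"
  using I unfolding inv_def by auto

lemma inv_step: "inv st \<Longrightarrow> (\<lambda>(ph, r, l, s, ms). r + l < n - 1) st \<Longrightarrow> inv (ronline_step n w q st)"
proof -
  assume I: "inv st" and g0: "(\<lambda>(ph, r, l, s, ms). r + l < n - 1) st"
  obtain ph r l s ms where st: "st = (ph, r, l, s, ms)" by (cases st) auto
  have g: "r + l < n - 1" using g0 st by simp
  have ph: "ph = 1 \<or> ph = 2 \<or> ph = 3" using I st unfolding inv_def by simp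
  show ?thesis
    unfolding st step_eq
    using I[unfolded st] g ph step1a step1b step2a step2b step3a step3b by auto
qed

definition msr :: "rstate \<Rightarrow> nat" where
"msr st = (case st of (ph, r, l, s, ms) \<Rightarrow> 4 * (n - 1 - (r + l)) +
   (if ph = 1 then (if bw l + q * (if s then 1 else 0) \<ge> aw r then 1 else 4)
    else if ph = 2 then 3 else 2))"

lemma msr_dec: "inv st \<Longrightarrow> (\<lambda>(ph, r, l, s, ms). r + l < n - 1) st \<Longrightarrow> msr (ronline_step n w q st) < msr st"
proof -
  assume I: "inv st" and g0: "(\<lambda>(ph, r, l, s, ms). r + l < n - 1) st"
  obtain ph r l s ms where st: "st = (ph, r, l, s, ms)" by (cases st) auto
  have g: "r + l < n - 1" using g0 st by simp
  have ph: "ph = 1 \<or> ph = 2 \<or> ph = 3" using I st unfolding inv_def by simp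
  have i3: "ph = 3 \<and> s \<longrightarrow> aw r \<le> bw 0 + q" "s \<longrightarrow> l = 0" using I st unfolding inv_def by auto
  define D where "D = n - 1 - (r + l)"
  have D1: "D \<ge> 1" "n - 1 - (Suc r + l) = D - 1" "n - 1 - (r + Suc l) = D - 1" using g unfolding D_def by auto
  have gen: "msr (ph', r', l', s', ms') \<le> 4 * (n - 1 - (r' + l')) + 4" for ph' r' l' s' ms'
    unfolding msr_def by simp
  let ?cond = "bw l + q * (if s then 1 else 0) \<ge> aw r"
  show ?thesis
  proof -
    consider "ph = 1" "?cond" | "ph = 1" "\<not> ?cond" | "ph = 2" | "ph = 3" using ph by blast
    then show ?thesis
    proof cases
      case 1
      have "msr (1, Suc r, l, s, ms @ [Go 0 (rpos n d (Suc r))]) \<le> 4 * (D - 1) + 4"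
        using gen[of 1 "Suc r" l s] D1 by simp
      moreover have "msr st = 4 * D + 1" using 1 unfolding st msr_def D_def by simp
      ultimately show ?thesis using 1 D1 unfolding st step_eq by simp
    next
      case 2
      have "msr (2, r, l, s, ms) = 4 * D + 3" unfolding msr_def D_def by simp
      moreover have "msr st = 4 * D + 4" using 2 unfolding st msr_def D_def by simp
      ultimately show ?thesis using 2 unfolding st step_eq by simp
    next
      case 3
      have "msr (3, r, Suc l, False, ms @ [Invoke, Go 1 (rpos n (-d) (Suc l))]) = 4 * (D - 1) + 2"
        using D1 unfolding msr_def D_def by simp
      moreover have "msr (3, r, l, s, ms) = 4 * D + 2" unfolding msr_def D_def by simp
      moreover have "msr st = 4 * D + 3" using 3 unfolding st msr_def D_def by simp
      ultimately show ?thesis using 3 D1 unfolding st step_eq by auto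
    next
      case 4
      have "msr (3, r, Suc l, s, ms @ [Go 1 (rpos n (-d) (Suc l))]) = 4 * (D - 1) + 2"
        using D1 unfolding msr_def D_def by simp
      moreover have c1: "\<not> (\<not> s \<and> bw l < aw r) \<Longrightarrow> ?cond" using i3 4 by auto
      then have "\<not> (\<not> s \<and> bw l < aw r) \<Longrightarrow> msr (1, r, l, s, ms) = 4 * D + 1" unfolding msr_def D_def by simp
      moreover have "msr st = 4 * D + 2" using 4 unfolding st msr_def D_def by simp
      ultimately show ?thesis using 4 D1 unfolding st step_eq by auto
    qed
  qed
qed

lemma final:
  assumes I: "inv (ph, r, l, s, ms)" and g: "\<not> (r + l < n - 1)"
  shows "\<exists>ps c. exec n w q ms ([], {}, 0) = Some (ps, {..<n}, c) \<and> (\<forall>e<n. c \<le> 2 * (q + WW - w e))"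
proof -
  have rl: "r + l = n - 1" using I g unfolding inv_def by auto
  let ?c = "q * (if s then 1 else 2) + sum aw {..<r} + sum bw {..<l}"
  have ex: "exec n w q ms ([], {}, 0) = Some (if s then [rpos n d r] else [rpos n d r, rpos n (-d) l],
        {..<n}, ?c)" using I cover[OF rl] unfolding inv_def by auto
  have sp: "sum aw {..<r} + sum bw {..<l} + aw r = WW" by (rule sum_split[OF rl])
  have rn: "r < n" "l < n" using rl n3 by auto
  have bl: "bw l = aw r" using b_a[OF rn(2)] rl by (metis add_diff_cancel_right' diff_commute)
  have bound: "?c \<le> 2 * (q + WW - aw k)" if k: "k < n" for k
  proof (cases s)
    case True
    then have l0: "l = 0" using I unfolding inv_def by simp
    then have c: "?c = q + WW - aw r" using sp True by simp
    have A: "\<forall>k<r. aw k \<le> bw 0 + q" using I True unfolding inv_def by simp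
    have b0: "bw 0 = aw r" using bl l0 by simp
    have Wr: "aw r \<le> WW" using single rn by simp
    show ?thesis
    proof (cases "k = r")
      case True then show ?thesis using c Wr q0 by simp
    next
      case False
      then have "k < r" using k rl l0 by simp
      then have "aw k \<le> aw r + q" using A b0 by simp
      moreover have "aw k + aw r \<le> WW" using pair[OF k rn(1) False] .
      ultimately show ?thesis using c a_pos[of r] by simp
    qed
  next
    case False
    then have c: "?c = 2 * q + WW - aw r" using sp by simp
    have A: "\<forall>k<r. aw k \<le> max (aw r) (bw l)" "\<forall>j<l. bw j \<le> max (aw r) (bw l)"
      using I False unfolding inv_def by auto
    have mx: "max (aw r) (bw l) = aw r" using bl by simp
    have "aw k \<le> aw r"
    proof -
      consider "k < r" | "k = r" | "k > r" by linarith
      then show ?thesis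
      proof cases
        case 1 then show ?thesis using A mx by simp
      next
        case 2 then show ?thesis by simp
      next
        case 3
        have j: "n - 1 - k < l" "n - 1 - k < n" using 3 rl k by auto
        have "bw (n - 1 - k) = aw (n - 1 - (n - 1 - k))" using b_a[OF j(2)] .
        also have "n - 1 - (n - 1 - k) = k" using k by simp
        finally show ?thesis using A(2) j mx by auto
      qed
    qed
    moreover have "aw k \<le> WW" using single k by simp
    ultimately show ?thesis using c by simp
  qed
  have "\<forall>e<n. ?c \<le> 2 * (q + WW - w e)"
    using bound w_a eix_lt by simp
  then show ?thesis using ex by blast
qed

end


theorem lemma1:
  fixes n :: nat and w :: "nat \<Rightarrow> real" and q :: real
  assumes "n \<ge> 3" and "\<forall>i<n. w i > 0" and "q \<ge> 0"
  shows "\<exists>ms ps c. ring_online n w q = Some ms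
           \<and> exec n w q ms ([], {}, 0) = Some (ps, {..<n}, c)
           \<and> c \<le> 2 * ring_opt n w q"
proof -
  define d where "d = rdir n w"
  have d1: "d = 1 \<or> d = -1" unfolding d_def rdir_def by auto
  interpret R: ronl n w q d using assms d1 by unfold_locales (auto simp: d_def)
  let ?b = "\<lambda>(ph::nat, r::nat, l::nat, s::bool, ms::move list). r + l < n - 1"
  have "\<exists>t. while_option ?b (ronline_step n w q) (1, 0, 0, True, [Invoke]) = Some t"
    using measure_while_option_Some[of R.inv ?b "ronline_step n w q" R.msr] R.inv_step R.msr_dec R.inv_init
    by blast
  then obtain t where t: "while_option ?b (ronline_step n w q) (1, 0, 0, True, [Invoke]) = Some t" by blast
  obtain ph r l s ms where tt: "t = (ph, r, l, s, ms)" by (cases t) auto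
  have It: "R.inv t" by (rule while_option_rule[where P = R.inv, OF R.inv_step t R.inv_init])
  have ng: "\<not> ?b t" by (rule while_option_stop[OF t])
  obtain ps c where ex: "exec n w q ms ([], {}, 0) = Some (ps, {..<n}, c)"
      and bnd: "\<forall>e<n. c \<le> 2 * (q + sum w {..<n} - w e)"
    using R.final[of ph r l s ms] It ng tt by auto
  have ro: "ring_online n w q = Some ms" unfolding ring_online_def using t tt by simp
  have ne: "c \<in> explore_costs n w q" unfolding explore_costs_def using ex by blast
  have lb: "c / 2 \<le> x" if xin: "x \<in> explore_costs n w q" for x
  proof -
    obtain ms' ps' where "exec n w q ms' ([], {}, 0) = Some (ps', {..<n}, x)"
      using xin unfolding explore_costs_def by blast
    then obtain e where e: "e < n" "q + sum w {..<n} - w e \<le> x"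
      using lower_bound[OF assms] by blast
    then show ?thesis using bnd by force
  qed
  have "c / 2 \<le> Inf (explore_costs n w q)"
    by (rule cInf_greatest) (use ne lb in auto)
  then have "c \<le> 2 * ring_opt n w q" unfolding ring_opt_def by simp
  then show ?thesis using ro ex by blast
qed

end
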